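(* Let $X$ be a nonnegative integer-valued random variable whose PGF $X(z)$ has radius of convergence $r>1$, with mean $\mu=X'(1)>0$ and variance $\sigma^2>0$, such that $|X(z)|<X(r_1)$ whenever $|z|=r_1$, $z\ne r_1$, $r_1\in(0,r)$. For positive integers $n,s$ let $A(z)=X(z)^n$, $\mu_A=n\mu<s$, with degree of $X(z)$ larger than $s/n$, and let $Z_0$ be the zero of $z^s-A(z)$ of minimal modulus in $1<|z|<r$. Suppose $\frac{n\mu}{s}=1-\frac{\gamma}{\sqrt s}$ with $\gamma$ bounded away from $0$ and $\infty$ as $s\to\infty$. Then $$-\frac{s-\mu_A}{sZ_0^{s-1}-A'(Z_0)}=\Big(\frac{1}{Z_0}\Big)^{s-1}\big(1+O(s^{-1/2})\big),\qquad s\to\infty.$$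
   Context: $\sigma^2=X''(1)-X'(1)^2+X'(1)$. $O$-terms refer to $s\to\infty$ with constants independent of $s$. *)

theory Defs
  imports "HOL-Probability.Probability"
begin

definition pgf :: "nat pmf \<Rightarrow> complex \<Rightarrow> complex" where
  "pgf P z = (\<Sum>k. complex_of_real (pmf P k) * z ^ k)"

definition pgf_radius :: "nat pmf \<Rightarrow> ereal" where
  "pgf_radius P = conv_radius (\<lambda>k. complex_of_real (pmf P k))"

end

theory Submission
  imports Defs "HOL-Complex_Analysis.Complex_Analysis"
begin

definition fP :: "nat pmf \<Rightarrow> complex fps" where
  "fP P = Abs_fps (\<lambda>k. complex_of_real (pmf P k))"

lemma pgf_eq: "pgf P = eval_fps (fP P)"
  by (auto simp: fun_eq_iff pgf_def eval_fps_def fP_def)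

lemma radius_eq: "fps_conv_radius (fP P) = pgf_radius P"
  by (simp add: fps_conv_radius_def pgf_radius_def fP_def)

lemma pmf_expectation_sums:
  fixes g :: "nat \<Rightarrow> real"
  assumes "summable (\<lambda>k. norm (pmf P k * g k))"
  shows "(\<lambda>k. pmf P k * g k) sums measure_pmf.expectation P g"
proof -
  have "measure_pmf.expectation P g = (\<integral>n. pmf P n * g n \<partial>count_space UNIV)"
    unfolding measure_pmf_eq_density by (subst integral_density) auto
  moreover have "integrable (count_space UNIV) (\<lambda>n. pmf P n * g n)"
    using assms unfolding integrable_count_space_nat_iff by simp
  ultimately show ?thesis using sums_integral_count_space_nat by metis
qed

lemma moments:
  assumes rad: "pgf_radius P > 1"
  shows "eval_fps (fP P) 1 = 1"
    "eval_fps (fps_deriv (fP P)) 1 = of_real (measure_pmf.expectation P real)"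
    "eval_fps (fps_deriv (fps_deriv (fP P))) 1 =
       of_real (measure_pmf.variance P real + (measure_pmf.expectation P real)^2 - measure_pmf.expectation P real)"
proof -
  define f where "f = fP P"
  define \<mu> where "\<mu> = measure_pmf.expectation P real"
  define \<sigma>2 where "\<sigma>2 = measure_pmf.variance P real"
  define a1 where "a1 = (\<lambda>k. real k * pmf P k)"
  define a2 where "a2 = (\<lambda>k. real k * (real k - 1) * pmf P k)"
  have R0: "ereal (norm (1::complex)) < fps_conv_radius f"
    using rad by (simp add: f_def radius_eq one_ereal_def)
  have R1: "ereal (norm (1::complex)) < fps_conv_radius (fps_deriv f)"
    using R0 fps_conv_radius_deriv[of f] by (meson order_less_le_trans)
  have R2: "ereal (norm (1::complex)) < fps_conv_radius (fps_deriv (fps_deriv f))"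
    using R1 fps_conv_radius_deriv[of "fps_deriv f"] by (meson order_less_le_trans)
  have S0: "summable (\<lambda>n. norm (fps_nth f n * 1 ^ n))"
    using abs_summable_in_conv_radius[OF R0[unfolded fps_conv_radius_def]] .
  have S1: "summable (\<lambda>n. norm (fps_nth (fps_deriv f) n * 1 ^ n))"
    using abs_summable_in_conv_radius[OF R1[unfolded fps_conv_radius_def]] .
  have S2: "summable (\<lambda>n. norm (fps_nth (fps_deriv (fps_deriv f)) n * 1 ^ n))"
    using abs_summable_in_conv_radius[OF R2[unfolded fps_conv_radius_def]] .
  have sp: "summable (pmf P)" using S0 by (simp add: f_def fP_def)
  have "summable (\<lambda>n. a1 (Suc n))" using S1
    by (simp add: f_def fP_def a1_def fps_deriv_nth norm_mult del: of_nat_Suc)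
  hence sa1: "summable a1" by (simp add: summable_Suc_iff)
  have "(\<lambda>n. norm (fps_nth (fps_deriv (fps_deriv f)) n * 1 ^ n)) = (\<lambda>n. a2 (Suc (Suc n)))"
    by (rule ext) (simp add: f_def fP_def fps_deriv_nth norm_mult del: of_nat_Suc, simp add: a2_def algebra_simps)
  hence "summable (\<lambda>n. a2 (Suc (Suc n)))" using S2 by simp
  hence sa2: "summable a2" using summable_Suc_iff[of a2] summable_Suc_iff[of "\<lambda>n. a2 (Suc n)"] by simp
  define m2 where "m2 = suminf (\<lambda>k. pmf P k * real k ^ 2)"
  have eq2: "(\<lambda>k. pmf P k * real k ^ 2) = (\<lambda>k. a2 k + a1 k)"
    by (auto simp: a1_def a2_def power2_eq_square algebra_simps)
  have sm2: "(\<lambda>k. pmf P k * real k ^ 2) sums m2"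
    unfolding m2_def eq2 using sa1 sa2 by (intro summable_sums summable_add)
  have s0: "(\<lambda>k. pmf P k) sums 1"
  proof -
    have "(\<lambda>k. pmf P k * 1) sums measure_pmf.expectation P (\<lambda>_. 1::real)"
      by (rule pmf_expectation_sums) (use sp in simp)
    thus ?thesis by simp
  qed
  have s1: "a1 sums \<mu>"
    using pmf_expectation_sums[of P real] sa1 unfolding \<mu>_def a1_def by (simp add: mult.commute)
  have "(\<lambda>k. pmf P k * (real k - \<mu>)^2) sums (m2 - 2 * \<mu> * \<mu> + \<mu>^2 * 1)"
  proof -
    have "(\<lambda>k. pmf P k * real k ^ 2 - 2 * \<mu> * a1 k + \<mu>^2 * pmf P k) sums (m2 - 2 * \<mu> * \<mu> + \<mu>^2 * 1)"
      by (intro sums_add sums_diff sums_mult sm2 s1 s0)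
    moreover have "(\<lambda>k. pmf P k * real k ^ 2 - 2 * \<mu> * a1 k + \<mu>^2 * pmf P k) = (\<lambda>k. pmf P k * (real k - \<mu>)^2)"
      by (auto simp: a1_def power2_eq_square algebra_simps)
    ultimately show ?thesis by simp
  qed
  moreover have "(\<lambda>k. pmf P k * (real k - \<mu>)^2) sums \<sigma>2"
    unfolding \<sigma>2_def \<mu>_def
    by (rule pmf_expectation_sums) (use calculation in \<open>auto simp: sums_iff \<mu>_def\<close>)
  ultimately have sig: "\<sigma>2 = m2 - \<mu>^2" by (simp add: sums_iff power2_eq_square)
  have s2: "a2 sums (m2 - \<mu>)"
  proof -
    have "(\<lambda>k. pmf P k * real k ^ 2 - a1 k) sums (m2 - \<mu>)" by (intro sums_diff sm2 s1)
    moreover have "(\<lambda>k. pmf P k * real k ^ 2 - a1 k) = a2"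
      by (auto simp: a1_def a2_def power2_eq_square algebra_simps)
    ultimately show ?thesis by simp
  qed
  have e0: "(\<lambda>n. fps_nth f n * 1 ^ n) sums eval_fps f 1"
    unfolding eval_fps_def by (rule summable_sums, rule summable_in_conv_radius) (use R0 in \<open>simp add: fps_conv_radius_def\<close>)
  have e1: "(\<lambda>n. fps_nth (fps_deriv f) n * 1 ^ n) sums eval_fps (fps_deriv f) 1"
    unfolding eval_fps_def by (rule summable_sums, rule summable_in_conv_radius) (use R1 in \<open>simp add: fps_conv_radius_def\<close>)
  have e2: "(\<lambda>n. fps_nth (fps_deriv (fps_deriv f)) n * 1 ^ n) sums eval_fps (fps_deriv (fps_deriv f)) 1"
    unfolding eval_fps_def by (rule summable_sums, rule summable_in_conv_radius) (use R2 in \<open>simp add: fps_conv_radius_def\<close>)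
  have "(\<lambda>n. fps_nth f n * 1 ^ n) sums of_real 1"
    using s0 sums_of_real_iff[where 'a=complex, of "pmf P" 1] by (simp add: f_def fP_def)
  with e0 show "eval_fps (fP P) 1 = 1" by (simp add: f_def sums_iff)
  have "(\<lambda>n. a1 (Suc n)) sums \<mu>" using s1 sums_Suc_iff[of a1 \<mu>] by (simp add: a1_def)
  hence "(\<lambda>n. complex_of_real (a1 (Suc n))) sums of_real \<mu>" by (simp only: sums_of_real_iff)
  moreover have "(\<lambda>n. complex_of_real (a1 (Suc n))) = (\<lambda>n. fps_nth (fps_deriv f) n * 1^n)"
    by (rule ext) (simp add: a1_def f_def fP_def fps_deriv_nth del: of_nat_Suc)
  ultimately have "(\<lambda>n. fps_nth (fps_deriv f) n * 1 ^ n) sums of_real \<mu>" by simp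
  with e1 show "eval_fps (fps_deriv (fP P)) 1 = of_real (measure_pmf.expectation P real)"
    by (simp add: f_def sums_iff \<mu>_def)
  have "(\<lambda>n. a2 (Suc (Suc n))) sums (m2 - \<mu>)"
    using s2 sums_Suc_iff[of a2 "m2 - \<mu>"] sums_Suc_iff[of "\<lambda>n. a2 (Suc n)" "m2 - \<mu>"] by (simp add: a2_def)
  hence "(\<lambda>n. complex_of_real (a2 (Suc (Suc n)))) sums of_real (m2 - \<mu>)" by (simp only: sums_of_real_iff)
  moreover have "(\<lambda>n. complex_of_real (a2 (Suc (Suc n)))) = (\<lambda>n. fps_nth (fps_deriv (fps_deriv f)) n * 1^n)"
    by (rule ext) (simp add: a2_def f_def fP_def fps_deriv_nth algebra_simps)
  ultimately have "(\<lambda>n. fps_nth (fps_deriv (fps_deriv f)) n * 1 ^ n) sums of_real (m2 - \<mu>)" by simp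
  with e2 show "eval_fps (fps_deriv (fps_deriv (fP P))) 1 =
       of_real (measure_pmf.variance P real + (measure_pmf.expectation P real)^2 - measure_pmf.expectation P real)"
    using sig by (simp add: f_def sums_iff \<mu>_def \<sigma>2_def)
qed

lemma eval_fps_chain [derivative_intros]:
  fixes f :: "complex fps"
  assumes "norm (g x) < fps_conv_radius f" "(g has_field_derivative g') (at x within S)"
  shows "((\<lambda>x. eval_fps f (g x)) has_field_derivative eval_fps (fps_deriv f) (g x) * g') (at x within S)"
  using DERIV_chain'[OF assms(2) has_field_derivative_eval_fps[OF assms(1)]] by (simp add: mult.commute)

lemma analytic_facts:
  assumes rad: "pgf_radius P > 1"
  defines "\<mu> \<equiv> measure_pmf.expectation P real"
    and "\<sigma>2 \<equiv> measure_pmf.variance P real"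
  shows "\<exists>\<delta> B D D1. 0 < \<delta> \<and> 0 \<le> B \<and>
     (\<forall>u::real. 0 \<le> u \<and> u \<le> \<delta> \<longrightarrow> ereal (exp u) < pgf_radius P) \<and>
     continuous_on {0..\<delta>} (\<lambda>u. Re (D (complex_of_real u))) \<and>
     (\<forall>u. 0 \<le> u \<and> u \<le> \<delta> \<longrightarrow> D (of_real u) = of_real (Re (D (of_real u)))) \<and>
     (\<forall>u. 0 \<le> u \<and> u \<le> \<delta> \<longrightarrow> pgf P (of_real (exp u)) = of_real (exp (Re (D (of_real u)) + \<mu> * u))) \<and>
     (\<forall>u. 0 \<le> u \<and> u \<le> \<delta> \<longrightarrow> of_real (exp u) * eval_fps (fps_deriv (fP P)) (of_real (exp u))
            = (D1 (complex_of_real u) + of_real \<mu>) * pgf P (of_real (exp u))) \<and>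
     (\<forall>u. 0 \<le> u \<and> u \<le> \<delta> \<longrightarrow> cmod (D (of_real u) - of_real (\<sigma>2 * u^2/2)) \<le> B * u^3) \<and>
     (\<forall>u. 0 \<le> u \<and> u \<le> \<delta> \<longrightarrow> cmod (D1 (complex_of_real u) - of_real (\<sigma>2 * u)) \<le> B * u^2)"
proof -
  define f where "f = fP P"
  define G0 where "G0 = eval_fps f"
  define G1 where "G1 = eval_fps (fps_deriv f)"
  define G2 where "G2 = eval_fps (fps_deriv (fps_deriv f))"
  note mom = moments[OF rad]
  have G0_1: "G0 1 = 1" using mom by (simp add: G0_def f_def)
  have G1_1: "G1 1 = of_real \<mu>" using mom by (simp add: G1_def f_def \<mu>_def)
  have G2_1: "G2 1 = of_real (\<sigma>2 + \<mu>^2 - \<mu>)" using mom by (simp add: G2_def f_def \<mu>_def \<sigma>2_def)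
  obtain r' where r': "1 < ereal r'" "ereal r' < pgf_radius P" using ereal_dense2[OF rad] by blast
  have r'1: "r' > 1" using r' by (simp add: one_ereal_def)
  define \<delta>0 where "\<delta>0 = ln r'"
  have \<delta>0: "\<delta>0 > 0" using r'1 by (simp add: \<delta>0_def)
  have expin: "ereal (cmod (exp z)) < fps_conv_radius f" if "cmod z < \<delta>0" for z
  proof -
    have "cmod (exp z) = exp (Re z)" by simp
    also have "\<dots> \<le> exp (cmod z)" using abs_Re_le_cmod[of z] by simp
    also have "\<dots> < exp \<delta>0" using that by simp
    also have "\<dots> = r'" using r'1 by (simp add: \<delta>0_def)
    finally show ?thesis using r' by (simp add: f_def radius_eq) (meson ereal_less_eq(3) le_less_trans less_imp_le)
  qed
  have expin1: "ereal (cmod (exp z)) < fps_conv_radius (fps_deriv f)" if "cmod z < \<delta>0" for z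
    using expin[OF that] fps_conv_radius_deriv[of f] by (meson order_less_le_trans)
  have expin2: "ereal (cmod (exp z)) < fps_conv_radius (fps_deriv (fps_deriv f))" if "cmod z < \<delta>0" for z
    using expin1[OF that] fps_conv_radius_deriv[of "fps_deriv f"] by (meson order_less_le_trans)
  have hcont: "continuous_on (ball 0 \<delta>0) (\<lambda>z. G0 (exp z))"
    unfolding G0_def by (intro continuous_on_eval_fps' continuous_intros) (auto simp: eball_def intro!: expin)
  then obtain \<delta>1 where \<delta>1: "\<delta>1 > 0" "\<And>z. z \<in> ball 0 \<delta>0 \<Longrightarrow> dist z 0 < \<delta>1 \<Longrightarrow> dist (G0 (exp z)) (G0 (exp 0)) < 1/2"
    unfolding continuous_on_iff using \<delta>0 by (metis centre_in_ball half_gt_zero_iff zero_less_one)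
  define \<rho> where "\<rho> = min \<delta>0 \<delta>1"
  define U where "U = ball (0::complex) \<rho>"
  have \<rho>: "\<rho> > 0" using \<delta>0 \<delta>1 by (simp add: \<rho>_def)
  have openU: "open U" by (simp add: U_def)
  have inU: "cmod z < \<delta>0" "cmod (G0 (exp z) - 1) < 1/2" if "z \<in> U" for z
    using that \<delta>1(2)[of z] G0_1 by (auto simp: U_def \<rho>_def dist_norm norm_minus_commute)
  have ReG: "Re (G0 (exp z)) > 1/2" if "z \<in> U" for z
  proof -
    have "\<bar>Re (G0 (exp z) - 1)\<bar> < 1/2" using inU(2)[OF that] abs_Re_le_cmod le_less_trans by blast
    thus ?thesis using abs_less_iff[of "Re (G0 (exp z) - 1)" "1/2"] by simp
  qed
  have G0nz: "G0 (exp z) \<noteq> 0" if "z \<in> U" for z using ReG[OF that] by auto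
  have G0np: "G0 (exp z) \<notin> \<real>\<^sub>\<le>\<^sub>0" if "z \<in> U" for z
    using ReG[OF that] by (auto elim!: nonpos_Reals_cases)
  define D where "D = (\<lambda>z. Ln (G0 (exp z)) - of_real \<mu> * z)"
  define D1 where "D1 = (\<lambda>z. exp z * G1 (exp z) / G0 (exp z) - of_real \<mu>)"
  define D2 where "D2 = (\<lambda>z. ((exp z * G1 (exp z) + exp z * (G2 (exp z) * exp z)) * G0 (exp z)
                 - exp z * G1 (exp z) * (G1 (exp z) * exp z)) / (G0 (exp z))^2)"
  have dD: "(D has_field_derivative D1 z) (at z)" if "z \<in> U" for z
  proof -
    have h': "((\<lambda>z. G0 (exp z)) has_field_derivative G1 (exp z) * exp z) (at z)"
      unfolding G0_def G1_def by (intro eval_fps_chain DERIV_exp expin inU that)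
    have "((\<lambda>z. Ln (G0 (exp z))) has_field_derivative inverse (G0 (exp z)) * (G1 (exp z) * exp z)) (at z)"
      using DERIV_chain2[OF has_field_derivative_Ln[OF G0np[OF that]] h'] .
    hence "((\<lambda>z. Ln (G0 (exp z)) - of_real \<mu> * z) has_field_derivative
            inverse (G0 (exp z)) * (G1 (exp z) * exp z) - of_real \<mu> * 1) (at z)"
      by (intro DERIV_diff DERIV_cmult DERIV_ident)
    thus ?thesis unfolding D_def D1_def by (rule DERIV_cong) (simp add: field_simps)
  qed
  have dD1: "(D1 has_field_derivative D2 z) (at z)" if "z \<in> U" for z
  proof -
    have hG0: "((\<lambda>z. G0 (exp z)) has_field_derivative G1 (exp z) * exp z) (at z)"
      unfolding G0_def G1_def by (intro eval_fps_chain DERIV_exp expin inU that)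
    have hG1: "((\<lambda>z. G1 (exp z)) has_field_derivative G2 (exp z) * exp z) (at z)"
      unfolding G2_def G1_def by (intro eval_fps_chain DERIV_exp expin1 inU that)
    have num: "((\<lambda>z. exp z * G1 (exp z)) has_field_derivative exp z * G1 (exp z) + G2 (exp z) * exp z * exp z) (at z)"
      using DERIV_mult[OF DERIV_exp hG1] .
    have "((\<lambda>z. exp z * G1 (exp z) / G0 (exp z) - of_real \<mu>) has_field_derivative
       ((exp z * G1 (exp z) + G2 (exp z) * exp z * exp z) * G0 (exp z) - exp z * G1 (exp z) * (G1 (exp z) * exp z))
         / (G0 (exp z) * G0 (exp z)) - 0) (at z)"
      by (intro DERIV_diff DERIV_divide num hG0 DERIV_const G0nz that)
    thus ?thesis unfolding D1_def D2_def by (simp add: power2_eq_square algebra_simps)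
  qed
  have holD: "D holomorphic_on U" using dD openU holomorphic_on_open by blast
  have holD1: "D1 holomorphic_on U" using dD1 openU holomorphic_on_open by blast
  have "0 \<in> U" using \<rho> by (simp add: U_def)
  have D0: "D 0 = 0" by (simp add: D_def G0_1)
  have D10: "D1 0 = 0" by (simp add: D1_def G0_1 G1_1)
  have D20: "deriv D1 0 = of_real \<sigma>2"
  proof -
    have "deriv D1 0 = D2 0" using dD1[OF \<open>0 \<in> U\<close>] by (rule DERIV_imp_deriv)
    also have "\<dots> = of_real \<sigma>2" by (simp add: D2_def G0_1 G1_1 G2_1 power2_eq_square algebra_simps)
    finally show ?thesis .
  qed
  define \<delta> where "\<delta> = \<rho> / 2"
  have \<delta>: "\<delta> > 0" using \<rho> by (simp add: \<delta>_def)
  define S where "S = cball (0::complex) \<delta>"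
  have SU: "S \<subseteq> U" using \<rho> by (auto simp: S_def U_def \<delta>_def)
  have cS: "compact S" "convex S" by (simp_all add: S_def)
  have "continuous_on S ((deriv ^^ 2) D1)"
    using holomorphic_on_imp_continuous_on[OF holomorphic_higher_deriv[OF holD1 openU]] SU
      continuous_on_subset by blast
  hence "bounded (((deriv ^^ 2) D1) ` S)"
    by (intro compact_imp_bounded compact_continuous_image cS(1))
  then obtain B0 where B0: "\<And>x. x \<in> S \<Longrightarrow> cmod ((deriv ^^ 2) D1 x) \<le> B0"
    unfolding bounded_iff by blast
  define B where "B = max B0 0"
  have hd: "((deriv ^^ k) D1 has_field_derivative (deriv ^^ Suc k) D1 x) (at x within S)" if "x \<in> S" for k x
    using holomorphic_derivI[OF holomorphic_higher_deriv[OF holD1 openU] openU, of x k S] that SU by auto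
  have "0 \<in> S" using \<delta> by (simp add: S_def)
  define F where "F = (\<lambda>i. if i = 0 then D else (deriv ^^ (i - 1)) D1)"
  have TD: "cmod (F 0 z - (\<Sum>i\<le>2. F i 0 * (z - 0) ^ i / fact i)) \<le> B0 * cmod (z - 0) ^ Suc 2 / fact 2"
    if "z \<in> S" for z
  proof (rule complex_Taylor[OF cS(2) _ _ \<open>0 \<in> S\<close> that])
    fix i :: nat and x assume x: "x \<in> S" and "i \<le> 2"
    show "(F i has_field_derivative F (Suc i) x) (at x within S)"
    proof (cases i)
      case 0
      thus ?thesis using dD[of x] x SU by (auto simp: F_def intro: has_field_derivative_at_within)
    next
      case (Suc k)
      thus ?thesis using hd[OF x, of k] by (simp add: F_def)
    qed
  next
    fix x assume "x \<in> S" thus "cmod (F (Suc 2) x) \<le> B0" using B0 by (simp add: F_def)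
  qed
  have TD1: "cmod ((deriv ^^ 0) D1 z - (\<Sum>i\<le>1. (deriv ^^ i) D1 0 * (z - 0) ^ i / fact i)) \<le> B0 * cmod (z - 0) ^ Suc 1 / fact 1"
    if "z \<in> S" for z
  proof (rule complex_Taylor[OF cS(2) _ _ \<open>0 \<in> S\<close> that])
    fix i :: nat and x assume x: "x \<in> S" and "i \<le> 1"
    show "((deriv ^^ i) D1 has_field_derivative (deriv ^^ Suc i) D1 x) (at x within S)" using hd[OF x] .
  next
    fix x assume "x \<in> S" thus "cmod ((deriv ^^ Suc 1) D1 x) \<le> B0" using B0 by (simp add: numeral_2_eq_2)
  qed
  have bD: "cmod (D (of_real u) - of_real (\<sigma>2 * u^2/2)) \<le> B * u^3" if "0 \<le> u" "u \<le> \<delta>" for u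
  proof -
    have z: "complex_of_real u \<in> S" using that by (simp add: S_def)
    have "(\<Sum>i\<le>2. F i 0 * (of_real u - 0) ^ i / fact i) = of_real (\<sigma>2 * u^2/2)"
      by (simp add: numeral_2_eq_2 F_def D0 D10 D20 power2_eq_square)
    hence "cmod (D (of_real u) - of_real (\<sigma>2 * u^2/2)) \<le> B0 * u ^ 3 / 2"
      using TD[OF z] that by (simp add: F_def numeral_3_eq_3 numeral_2_eq_2 D0 D10 D20 power2_eq_square)
    also have "\<dots> \<le> B * u^3"
    proof -
      have u3: "0 \<le> u^3" using that by simp
      have "B0 * u^3 \<le> B * u^3" using u3 by (intro mult_right_mono) (auto simp: B_def)
      moreover have "0 \<le> B * u^3" using u3 by (simp add: B_def)
      ultimately show ?thesis by simp
    qed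
    finally show ?thesis .
  qed
  have bD1: "cmod (D1 (of_real u) - of_real (\<sigma>2 * u)) \<le> B * u^2" if "0 \<le> u" "u \<le> \<delta>" for u
  proof -
    have z: "complex_of_real u \<in> S" using that by (simp add: S_def)
    have "(\<Sum>i\<le>1. (deriv ^^ i) D1 0 * (of_real u - 0) ^ i / fact i) = of_real (\<sigma>2 * u)"
      by (simp add: D10 D20)
    hence "cmod (D1 (of_real u) - of_real (\<sigma>2 * u)) \<le> B0 * u ^ 2"
      using TD1[OF z] that by (simp add: power2_eq_square)
    also have "\<dots> \<le> B * u^2" using that by (auto simp: B_def intro!: mult_right_mono)
    finally show ?thesis .
  qed
  have real_facts: "D (of_real u) = of_real (Re (D (of_real u))) \<and>
       pgf P (of_real (exp u)) = of_real (exp (Re (D (of_real u)) + \<mu> * u)) \<and>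
       of_real (exp u) * eval_fps (fps_deriv (fP P)) (of_real (exp u))
            = (D1 (of_real u) + of_real \<mu>) * pgf P (of_real (exp u)) \<and>
       ereal (exp u) < pgf_radius P"
    if "0 \<le> u" "u \<le> \<delta>" for u
  proof -
    have zU: "complex_of_real u \<in> U" using that SU by (auto simp: S_def)
    define x where "x = exp u"
    have ex: "exp (complex_of_real u) = of_real x" by (simp add: x_def exp_of_real)
    have rx: "ereal (cmod (complex_of_real x)) < fps_conv_radius f"
      using expin[OF inU(1)[OF zU]] by (simp add: ex)
    have sm: "summable (\<lambda>k. fps_nth f k * (of_real x) ^ k)"
      using summable_in_conv_radius[of "of_real x" "fps_nth f"] rx by (simp add: fps_conv_radius_def)
    have eqt: "(\<lambda>k. fps_nth f k * (of_real x) ^ k) = (\<lambda>k. complex_of_real (pmf P k * x ^ k))"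
      by (simp add: f_def fP_def)
    have smr: "summable (\<lambda>k. pmf P k * x ^ k)" using sm unfolding eqt summable_of_real_iff .
    define y where "y = (\<Sum>k. pmf P k * x ^ k)"
    have Gy: "G0 (of_real x) = of_real y"
    proof -
      have "complex_of_real (\<Sum>k. pmf P k * x^k) = (\<Sum>k. complex_of_real (pmf P k * x^k))"
        by (rule suminf_of_real[OF smr])
      thus ?thesis unfolding G0_def eval_fps_def eqt y_def by simp
    qed
    have ypos: "y > 0" using ReG[OF zU] by (simp add: ex Gy)
    have Dr: "D (of_real u) = of_real (ln y - \<mu> * u)"
      by (simp add: D_def ex Gy Ln_of_real[OF ypos])
    have "exp (Re (D (of_real u)) + \<mu> * u) = y" using ypos by (simp add: Dr)
    moreover have "pgf P (of_real (exp u)) = of_real y" using Gy by (simp add: pgf_eq f_def[symmetric] G0_def[symmetric] x_def)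
    moreover have "of_real (exp u) * eval_fps (fps_deriv (fP P)) (of_real (exp u))
            = (D1 (of_real u) + of_real \<mu>) * pgf P (of_real (exp u))"
      using G0nz[OF zU] by (simp add: D1_def pgf_eq f_def[symmetric] G0_def[symmetric] G1_def[symmetric] ex x_def)
    moreover have "ereal (exp u) < pgf_radius P" using rx by (simp add: x_def f_def radius_eq)
    ultimately show ?thesis by (simp add: Dr)
  qed
  have cont: "continuous_on {0..\<delta>} (\<lambda>u. Re (D (complex_of_real u)))"
  proof -
    have "continuous_on {0..\<delta>} (\<lambda>u. D (complex_of_real u))"
      by (rule continuous_on_compose2[OF holomorphic_on_imp_continuous_on[OF holD] continuous_on_of_real])
         (use SU in \<open>auto simp: S_def\<close>)
    thus ?thesis by (intro continuous_intros)
  qed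
  show ?thesis
    apply (rule exI[of _ \<delta>], rule exI[of _ B], rule exI[of _ D], rule exI[of _ D1])
    using \<delta> real_facts bD bD1 cont by (auto simp: B_def)
qed

theorem lemma3p3:
  fixes P :: "nat pmf" and \<gamma>1 \<gamma>2 :: real
  assumes radius: "pgf_radius P > 1"
    and mean_pos: "measure_pmf.expectation P real > 0"
    and var_pos: "measure_pmf.variance P real > 0"
    and dominant: "\<forall>r1 z. 0 < r1 \<and> ereal r1 < pgf_radius P \<and> cmod z = r1 \<and> z \<noteq> complex_of_real r1
                    \<longrightarrow> cmod (pgf P z) < Re (pgf P (complex_of_real r1))"
    and gamma_bounds: "0 < \<gamma>1" "\<gamma>1 \<le> \<gamma>2"
  shows "\<exists>C S0. \<forall>(s::nat) (n::nat) (Z0::complex).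
      (let \<mu> = measure_pmf.expectation P real;
           A = (\<lambda>z. pgf P z ^ n);
           \<gamma> = (1 - real n * \<mu> / real s) * sqrt (real s)
       in s \<ge> S0 \<and> 0 < s \<and> 0 < n \<and> real n * \<mu> < real s
          \<and> (\<exists>k. real k > real s / real n \<and> pmf P k > 0)
          \<and> \<gamma>1 \<le> \<gamma> \<and> \<gamma> \<le> \<gamma>2
          \<and> 1 < cmod Z0 \<and> ereal (cmod Z0) < pgf_radius P \<and> Z0 ^ s = A Z0
          \<and> (\<forall>z. 1 < cmod z \<and> ereal (cmod z) < pgf_radius P \<and> z ^ s = A z \<longrightarrow> cmod Z0 \<le> cmod z)
       \<longrightarrow> cmod (- (of_nat s - of_real (real n * \<mu>)) / (of_nat s * Z0 ^ (s - 1) - deriv A Z0)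
                   - (1 / Z0) ^ (s - 1))
           \<le> C / sqrt (real s) * cmod ((1 / Z0) ^ (s - 1)))"
proof -
  define \<mu> where "\<mu> = measure_pmf.expectation P real"
  define \<sigma>2 where "\<sigma>2 = measure_pmf.variance P real"
  have \<mu>pos: "\<mu> > 0" using mean_pos by (simp add: \<mu>_def)
  have \<sigma>pos: "\<sigma>2 > 0" using var_pos by (simp add: \<sigma>2_def)
  have \<gamma>2pos: "\<gamma>2 > 0" using gamma_bounds by simp
  obtain \<delta> B D D1 where AF: "0 < \<delta> \<and> 0 \<le> B \<and>
     (\<forall>u::real. 0 \<le> u \<and> u \<le> \<delta> \<longrightarrow> ereal (exp u) < pgf_radius P) \<and>
     continuous_on {0..\<delta>} (\<lambda>u. Re (D (complex_of_real u))) \<and>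
     (\<forall>u. 0 \<le> u \<and> u \<le> \<delta> \<longrightarrow> D (of_real u) = of_real (Re (D (of_real u)))) \<and>
     (\<forall>u. 0 \<le> u \<and> u \<le> \<delta> \<longrightarrow> pgf P (of_real (exp u)) = of_real (exp (Re (D (of_real u)) + \<mu> * u))) \<and>
     (\<forall>u. 0 \<le> u \<and> u \<le> \<delta> \<longrightarrow> of_real (exp u) * eval_fps (fps_deriv (fP P)) (of_real (exp u))
            = (D1 (complex_of_real u) + of_real \<mu>) * pgf P (of_real (exp u))) \<and>
     (\<forall>u. 0 \<le> u \<and> u \<le> \<delta> \<longrightarrow> cmod (D (of_real u) - of_real (\<sigma>2 * u^2/2)) \<le> B * u^3) \<and>
     (\<forall>u. 0 \<le> u \<and> u \<le> \<delta> \<longrightarrow> cmod (D1 (complex_of_real u) - of_real (\<sigma>2 * u)) \<le> B * u^2)"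
    using analytic_facts[OF radius, folded \<mu>_def \<sigma>2_def] by (elim exE) (rule that)
  have \<delta>: "0 < \<delta>" and B: "0 \<le> B" and contd: "continuous_on {0..\<delta>} (\<lambda>u. Re (D (complex_of_real u)))"
    using AF by simp_all
  have rad_u: "\<And>u. 0 \<le> u \<Longrightarrow> u \<le> \<delta> \<Longrightarrow> ereal (exp u) < pgf_radius P" using AF by simp
  have Dreal: "\<And>u. 0 \<le> u \<Longrightarrow> u \<le> \<delta> \<Longrightarrow> D (of_real u) = of_real (Re (D (of_real u)))" using AF by simp
  have pgfr: "\<And>u. 0 \<le> u \<Longrightarrow> u \<le> \<delta> \<Longrightarrow> pgf P (of_real (exp u)) = of_real (exp (Re (D (of_real u)) + \<mu> * u))"
    using AF by simp
  have D1rel: "\<And>u. 0 \<le> u \<Longrightarrow> u \<le> \<delta> \<Longrightarrow> of_real (exp u) * eval_fps (fps_deriv (fP P)) (of_real (exp u))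
            = (D1 (complex_of_real u) + of_real \<mu>) * pgf P (of_real (exp u))" using AF by simp
  have bD: "\<And>u. 0 \<le> u \<Longrightarrow> u \<le> \<delta> \<Longrightarrow> cmod (D (of_real u) - of_real (\<sigma>2 * u^2/2)) \<le> B * u^3"
    using AF by simp
  have bD1: "\<And>u. 0 \<le> u \<Longrightarrow> u \<le> \<delta> \<Longrightarrow> cmod (D1 (complex_of_real u) - of_real (\<sigma>2 * u)) \<le> B * u^2"
    using AF by simp
  define d where "d = (\<lambda>u. Re (D (complex_of_real u)))"
  define K where "K = \<sigma>2/2 + B*\<delta> + 1"
  have Kpos: "K > 0" using \<sigma>pos mult_nonneg_nonneg[OF B less_imp_le[OF \<delta>]] by (simp add: K_def)
  define \<delta>2 where "\<delta>2 = min \<delta> (\<sigma>2 / (8*(B+1)))"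
  have \<delta>2: "0 < \<delta>2" "\<delta>2 \<le> \<delta>" using \<delta> \<sigma>pos B by (auto simp: \<delta>2_def)
  have small: "B * u \<le> \<sigma>2/8" if "0 \<le> u" "u \<le> \<delta>2" for u
  proof -
    have "B * u \<le> B * (\<sigma>2 / (8*(B+1)))"
      using that B by (intro mult_left_mono) (auto simp: \<delta>2_def)
    also have "\<dots> \<le> \<sigma>2/8" using B \<sigma>pos by (simp add: field_simps)
    finally show ?thesis .
  qed
  have dlow: "d u \<ge> \<sigma>2 * u^2 / 4" if "0 \<le> u" "u \<le> \<delta>2" for u
  proof -
    have e: "cmod (D (of_real u) - of_real (\<sigma>2 * u^2/2)) \<le> B * u^3" using bD that \<delta>2 by simp
    have "\<bar>Re (D (of_real u) - of_real (\<sigma>2 * u^2/2))\<bar> \<le> B * u^3"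
      using abs_Re_le_cmod e order_trans by blast
    hence "d u \<ge> \<sigma>2 * u^2/2 - B * u^3" by (simp add: d_def)
    moreover have "B * u^3 = (B*u) * u^2" by (simp add: power2_eq_square power3_eq_cube)
    moreover have "(B*u) * u^2 \<le> (\<sigma>2/8) * u^2" using small[OF that] by (intro mult_right_mono) auto
    moreover have "(\<sigma>2/8) * u^2 = \<sigma>2 * u^2 / 8" by simp
    moreover have "0 \<le> \<sigma>2 * u^2" using \<sigma>pos by simp
    ultimately show ?thesis by linarith
  qed
  have dup: "d u \<le> K * u^2" if "0 \<le> u" "u \<le> \<delta>" for u
  proof -
    have e: "cmod (D (of_real u) - of_real (\<sigma>2 * u^2/2)) \<le> B * u^3" using bD that by simp
    have "\<bar>Re (D (of_real u) - of_real (\<sigma>2 * u^2/2))\<bar> \<le> B * u^3"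
      using abs_Re_le_cmod e order_trans by blast
    hence "d u \<le> \<sigma>2 * u^2/2 + B * u^3" by (simp add: d_def)
    moreover have "B * u^3 = (B*u) * u^2" by (simp add: power2_eq_square power3_eq_cube)
    moreover have "(B*u) * u^2 \<le> (B*\<delta>) * u^2" using that B by (intro mult_right_mono mult_left_mono) auto
    moreover have "0 \<le> u^2" by simp
    moreover have "K * u^2 = \<sigma>2 * u^2/2 + (B*\<delta>) * u^2 + u^2" by (simp add: K_def algebra_simps)
    ultimately show ?thesis by linarith
  qed
  define M where "M = 2*\<gamma>2 + 16*\<mu>*\<gamma>2/(\<sigma>2*\<delta>2)"
  define C where "C = 12*B/\<sigma>2 * (16*\<mu>*\<gamma>2/\<sigma>2)"
  have key: "cmod (- (of_nat s - of_real (real n * \<mu>)) / (of_nat s * Z0 ^ (s - 1) - deriv (\<lambda>z. pgf P z ^ n) Z0)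
                   - (1 / Z0) ^ (s - 1))
           \<le> C / sqrt (real s) * cmod ((1 / Z0) ^ (s - 1))"
    if hs: "s \<ge> nat \<lceil>M^2\<rceil>" "0 < s" "0 < n" "real n * \<mu> < real s"
      "(1 - real n * \<mu> / real s) * sqrt (real s) \<le> \<gamma>2"
      "1 < cmod Z0" "ereal (cmod Z0) < pgf_radius P" "Z0 ^ s = pgf P Z0 ^ n"
      "\<forall>z. 1 < cmod z \<and> ereal (cmod z) < pgf_radius P \<and> z ^ s = pgf P z ^ n \<longrightarrow> cmod Z0 \<le> cmod z"
    for s n Z0
  proof -
    define g where "g = real s - real n * \<mu>"
    have sp: "real s > 0" "sqrt (real s) > 0" using hs by auto
    have np: "real n > 0" using hs by simp
    have Mpos: "M \<ge> 2*\<gamma>2" "M \<ge> 16*\<mu>*\<gamma>2/(\<sigma>2*\<delta>2)"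
      using \<gamma>2pos \<mu>pos \<sigma>pos \<delta>2 by (auto simp: M_def)
    have sqM: "sqrt (real s) \<ge> M"
    proof -
      have "M^2 \<le> real s" using hs(1) real_nat_ceiling_ge[of "M^2"] by linarith
      hence "sqrt (M^2) \<le> sqrt (real s)" by (rule real_sqrt_le_mono)
      thus ?thesis using Mpos \<gamma>2pos by simp
    qed
    have gpos: "g > 0" using hs by (simp add: g_def)
    have gle: "g \<le> \<gamma>2 * sqrt (real s)"
    proof -
      have "g = (1 - real n * \<mu> / real s) * sqrt (real s) * sqrt (real s)"
        using sp by (simp add: g_def field_simps)
      also have "\<dots> \<le> \<gamma>2 * sqrt (real s)" using hs(5) sp by (intro mult_right_mono) auto
      finally show ?thesis .
    qed
    have nmu: "real n * \<mu> \<ge> real s / 2"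
    proof -
      have "\<gamma>2 \<le> sqrt (real s) / 2" using sqM Mpos by linarith
      hence "\<gamma>2 * sqrt (real s) \<le> (sqrt (real s) / 2) * sqrt (real s)"
        using sp by (intro mult_right_mono) auto
      hence "g \<le> (sqrt (real s) / 2) * sqrt (real s)" using gle by linarith
      also have "\<dots> = real s / 2" using sp by simp
      finally show ?thesis by (simp add: g_def)
    qed
    define \<psi> where "\<psi> = (\<lambda>v. g * v - real n * d v)"
    have rootlem: "cmod Z0 < exp b" if b: "0 < b" "b \<le> \<delta>" "\<psi> b < 0" for b
    proof -
      define a where "a = min (b/2) (g / (2 * real n * K))"
      have a: "0 < a" "a < b" "a \<le> \<delta>" using b gpos np Kpos by (auto simp: a_def)
      have "a * (2 * real n * K) \<le> g"
        using np Kpos by (simp add: a_def pos_le_divide_eq[symmetric] min_le_iff_disj)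
      hence aK: "real n * K * a \<le> g / 2" by (simp add: algebra_simps)
      have "real n * d a \<le> real n * (K * a^2)" using dup[of a] a np by (intro mult_left_mono) auto
      also have "\<dots> = (real n * K * a) * a" by (simp add: power2_eq_square algebra_simps)
      also have "\<dots> \<le> (g/2) * a" using aK a by (intro mult_right_mono) auto
      finally have h: "real n * d a \<le> (g/2) * a" .
      have "g * a > 0" using a gpos by simp
      moreover have "(g/2) * a = g * a / 2" by simp
      ultimately have "\<psi> a > 0" using h unfolding \<psi>_def by linarith
      have ca: "continuous_on {a..b} \<psi>"
        unfolding \<psi>_def d_def
        by (intro continuous_intros continuous_on_subset[OF contd]) (use a b in auto)
      obtain v where v: "a \<le> v" "v \<le> b" "\<psi> v = 0"
        using IVT2'[of \<psi> b 0 a, OF _ _ _ ca] \<open>\<psi> a > 0\<close> b a by force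
      have "v \<noteq> b" using v(3) b(3) by auto
      hence vb: "v < b" using v(2) by simp
      have v0: "0 \<le> v" "v \<le> \<delta>" using v a b by auto
      have eqv: "real n * (d v + \<mu> * v) = real s * v"
        using v(3) unfolding \<psi>_def g_def by (simp add: algebra_simps)
      define z where "z = complex_of_real (exp v)"
      have "pgf P z ^ n = complex_of_real (exp (d v + \<mu> * v) ^ n)"
        using pgfr[OF v0] by (simp add: z_def d_def)
      also have "exp (d v + \<mu> * v) ^ n = exp (real n * (d v + \<mu> * v))" by (simp add: exp_of_nat_mult)
      also have "\<dots> = exp v ^ s" by (simp add: eqv exp_of_nat_mult[symmetric] mult.commute)
      finally have zroot: "z ^ s = pgf P z ^ n" by (simp add: z_def)
      have "1 < cmod z" using a v by (simp add: z_def)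
      moreover have "ereal (cmod z) < pgf_radius P" using rad_u[OF v0] by (simp add: z_def)
      ultimately have "cmod Z0 \<le> cmod z" using hs(9) zroot by blast
      also have "cmod z = exp v" by (simp add: z_def)
      also have "\<dots> < exp b" using vb by simp
      finally show ?thesis .
    qed
    define u1 where "u1 = 16*\<mu>*\<gamma>2/(\<sigma>2* sqrt (real s))"
    have u1pos: "u1 > 0" using \<mu>pos \<gamma>2pos \<sigma>pos sp by (simp add: u1_def)
    have u1le: "u1 \<le> \<delta>2"
    proof -
      have "u1 * sqrt (real s) = 16*\<mu>*\<gamma>2/\<sigma>2" using sp by (simp add: u1_def field_simps)
      also have "\<dots> = \<delta>2 * (16*\<mu>*\<gamma>2/(\<sigma>2*\<delta>2))" using \<delta>2 by (simp add: field_simps)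
      also have "\<dots> \<le> \<delta>2 * sqrt (real s)" using Mpos sqM \<delta>2 by (intro mult_left_mono) auto
      finally show ?thesis using sp by simp
    qed
    have "\<psi> u1 < 0"
    proof -
      have "real n * (\<sigma>2 * u1^2/4) = (real n * \<mu>) * (4*\<gamma>2/sqrt (real s)) * u1"
        using sp \<sigma>pos by (simp add: u1_def field_simps power2_eq_square)
      also have "\<dots> \<ge> (real s / 2) * (4*\<gamma>2/sqrt (real s)) * u1"
        using nmu u1pos \<gamma>2pos sp by (intro mult_right_mono) auto
      finally have h1: "real n * (\<sigma>2 * u1^2/4) \<ge> (real s / 2) * (4*\<gamma>2/sqrt (real s)) * u1" .
      have "(real s / 2) * (4*\<gamma>2/sqrt (real s)) = 2 * \<gamma>2 * sqrt (real s)"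
        using sp by (simp add: field_simps)
      hence eq: "(real s / 2) * (4*\<gamma>2/sqrt (real s)) * u1 = 2 * \<gamma>2 * sqrt (real s) * u1" by simp
      have h2: "real n * (\<sigma>2 * u1^2/4) \<ge> 2 * \<gamma>2 * sqrt (real s) * u1" using h1 unfolding eq .
      have "real n * d u1 \<ge> real n * (\<sigma>2 * u1^2/4)" using dlow[of u1] u1pos u1le np by (intro mult_left_mono) auto
      moreover have "g * u1 \<le> \<gamma>2 * sqrt (real s) * u1" using gle u1pos by (intro mult_right_mono) auto
      moreover have "\<gamma>2 * sqrt (real s) * u1 > 0" using \<gamma>2pos sp u1pos by simp
      ultimately show ?thesis using h2 unfolding \<psi>_def by linarith
    qed
    hence Zu1: "cmod Z0 < exp u1" using rootlem[of u1] u1pos u1le \<delta>2 by auto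
    define R where "R = cmod Z0"
    define v where "v = ln R"
    have R1: "R > 1" using hs by (simp add: R_def)
    have vpos: "v > 0" using R1 by (simp add: v_def)
    have expv: "exp v = R" using R1 by (simp add: v_def)
    have vu1: "v < u1"
    proof -
      have "R < exp u1" using Zu1 by (simp add: R_def)
      hence "ln R < ln (exp u1)" using R1 by (subst ln_less_cancel_iff) auto
      thus ?thesis by (simp add: v_def)
    qed
    have v0: "0 \<le> v" "v \<le> \<delta>" "v \<le> \<delta>2" using vpos vu1 u1le \<delta>2 by auto
    define F where "F = exp (d v + \<mu> * v)"
    have Fpos: "F > 0" by (simp add: F_def)
    have pgfR: "pgf P (complex_of_real R) = complex_of_real F"
      using pgfr[OF v0(1,2)] by (simp add: expv F_def d_def)
    have Zreal: "Z0 = complex_of_real R"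
    proof (rule ccontr)
      assume ne: "Z0 \<noteq> complex_of_real R"
      have c: "0 < R \<and> ereal R < pgf_radius P \<and> cmod Z0 = R \<and> Z0 \<noteq> complex_of_real R"
        using R1 ne hs(7) by (auto simp: R_def)
      have "cmod (pgf P Z0) < Re (pgf P (complex_of_real R))"
        using dominant c by blast
      hence lt: "cmod (pgf P Z0) < F" using pgfR by simp
      have "R ^ s = cmod (pgf P Z0) ^ n" using hs(8) by (simp add: R_def norm_power[symmetric])
      also have "\<dots> < F ^ n" using lt hs(3) by (intro power_strict_mono) auto
      finally have "exp (real s * v) < exp (real n * (d v + \<mu> * v))"
        by (simp add: exp_of_nat_mult expv F_def)
      hence "\<psi> v < 0" unfolding \<psi>_def g_def by (simp add: algebra_simps)
      hence "cmod Z0 < exp v" using rootlem[of v] vpos v0 by auto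
      thus False by (simp add: expv R_def)
    qed
    have "R ^ s = F ^ n"
    proof -
      have "complex_of_real (R ^ s) = complex_of_real (F ^ n)"
        using hs(8) pgfR by (simp add: Zreal)
      thus ?thesis using of_real_eq_iff by blast
    qed
    hence "exp (real s * v) = exp (real n * (d v + \<mu> * v))" by (simp add: exp_of_nat_mult expv F_def)
    hence gv: "g * v = real n * d v" unfolding g_def by (simp add: algebra_simps)
    define Dv where "Dv = D (complex_of_real v)"
    define D1v where "D1v = D1 (complex_of_real v)"
    define W where "W = pgf P Z0"
    define G1 where "G1 = eval_fps (fps_deriv (fP P)) Z0"
    define m where "m = s - 1"
    have sm: "s = Suc m" using hs by (simp add: m_def)
    have Zne: "Z0 \<noteq> 0" using R1 by (simp add: Zreal)
    have Wne: "W \<noteq> 0" using pgfR Fpos by (simp add: W_def Zreal)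
    have Dvr: "Dv = complex_of_real (d v)" using Dreal[OF v0(1,2)] by (simp add: Dv_def d_def)
    have rel: "Z0 * G1 = (D1v + of_real \<mu>) * W"
      using D1rel[OF v0(1,2)] by (simp add: Zreal expv G1_def D1v_def W_def)
    have dA: "deriv (\<lambda>z. pgf P z ^ n) Z0 = of_nat n * (G1 * W ^ (n - 1))"
    proof -
      have r: "norm Z0 < fps_conv_radius (fP P)" using hs(7) by (simp add: radius_eq)
      have "((\<lambda>z. pgf P z ^ n) has_field_derivative of_nat n * (G1 * W ^ (n - Suc 0))) (at Z0)"
        unfolding pgf_eq G1_def W_def by (intro DERIV_power has_field_derivative_eval_fps r)
      thus ?thesis by (simp add: DERIV_imp_deriv)
    qed
    have Zs: "Z0 ^ s = W ^ n" using hs(8) by (simp add: W_def)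
    have dA2: "deriv (\<lambda>z. pgf P z ^ n) Z0 = of_nat n * Z0 ^ m * (D1v + of_real \<mu>)"
    proof -
      have "Z0 * deriv (\<lambda>z. pgf P z ^ n) Z0 = of_nat n * (Z0 * G1) * W ^ (n - 1)"
        by (simp add: dA algebra_simps)
      also have "\<dots> = of_nat n * (D1v + of_real \<mu>) * (W * W ^ (n - 1))" by (simp only: rel) (simp add: algebra_simps)
      also have "W * W ^ (n - 1) = W ^ n" using hs(3) by (simp add: power_eq_if)
      also have "W ^ n = Z0 * Z0 ^ m" using Zs sm by simp
      finally have "Z0 * deriv (\<lambda>z. pgf P z ^ n) Z0 = Z0 * (of_nat n * Z0 ^ m * (D1v + of_real \<mu>))"
        by (simp add: algebra_simps)
      thus ?thesis using Zne by simp
    qed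
    have gc: "of_nat s - of_real (real n * \<mu>) = of_nat n * Dv / of_real v"
    proof -
      have "of_nat s - of_real (real n * \<mu>) = complex_of_real g" by (simp add: g_def)
      also have "g = real n * d v / v" using gv vpos by (simp add: field_simps)
      finally show ?thesis by (simp add: Dvr)
    qed
    have gc': "of_nat s - of_nat n * complex_of_real \<mu> = of_nat n * Dv / of_real v" using gc by simp
    define Q where "Q = of_real v * D1v - Dv"
    define e1 where "e1 = Dv - of_real (\<sigma>2 * v^2/2)"
    define e2 where "e2 = D1v - of_real (\<sigma>2 * v)"
    have be1: "cmod e1 \<le> B * v^3" using bD[OF v0(1,2)] by (simp add: e1_def Dv_def)
    have be2: "cmod e2 \<le> B * v^2" using bD1[OF v0(1,2)] by (simp add: e2_def D1v_def)
    have Bv: "B * v \<le> \<sigma>2/8" using small[OF v0(1,3)] .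
    have Qeq: "Q = of_real (\<sigma>2 * v^2/2) + of_real v * e2 - e1"
      by (simp add: Q_def e1_def e2_def algebra_simps power2_eq_square)
    have num: "Dv - Q = 2 * e1 - of_real v * e2"
      by (simp add: Q_def e1_def e2_def algebra_simps power2_eq_square)
    have Qlow: "cmod Q \<ge> \<sigma>2 * v^2 / 4"
    proof -
      have "cmod (of_real v * e2) \<le> v * (B * v^2)" using be2 vpos by (simp add: norm_mult mult_left_mono)
      moreover have "v * (B * v^2) = (B* v) * v^2" by (simp add: algebra_simps)
      moreover have "B * v^3 = (B* v) * v^2" by (simp add: power2_eq_square power3_eq_cube)
      moreover have "(B* v) * v^2 \<le> \<sigma>2 / 8 * v^2" using Bv by (intro mult_right_mono) auto
      moreover have "cmod Q \<ge> cmod (complex_of_real (\<sigma>2 * v^2/2)) - cmod (of_real v * e2) - cmod e1"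
      proof -
        have "complex_of_real (\<sigma>2 * v^2/2) = (Q - of_real v * e2) + e1" by (simp add: Qeq)
        hence "cmod (complex_of_real (\<sigma>2 * v^2/2)) \<le> cmod (Q - of_real v * e2) + cmod e1"
          using norm_triangle_ineq by metis
        moreover have "cmod (Q - of_real v * e2) \<le> cmod Q + cmod (of_real v * e2)" by (rule norm_triangle_ineq4)
        ultimately show ?thesis by linarith
      qed
      moreover have "cmod (complex_of_real (\<sigma>2 * v^2/2)) = \<sigma>2 * v^2/2" using \<sigma>pos by (simp only: norm_of_real) simp
      moreover have "0 \<le> \<sigma>2 * v^2" using \<sigma>pos by simp
      ultimately show ?thesis using be1 by linarith
    qed
    have "\<sigma>2 * v^2 / 4 > 0" using \<sigma>pos vpos by simp
    hence Qpos: "cmod Q > 0" using Qlow by linarith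
    hence Qne: "Q \<noteq> 0" by auto
    have bnum: "cmod (Dv - Q) \<le> 3 * B * v^3"
    proof -
      have "cmod (Dv - Q) \<le> cmod (2 * e1) + cmod (of_real v * e2)" unfolding num by (rule norm_triangle_ineq4)
      also have "\<dots> \<le> 2 * (B * v^3) + v * (B * v^2)" using be1 be2 vpos
        by (intro add_mono) (auto simp: norm_mult mult_left_mono)
      also have "\<dots> = 3 * B * v^3" by (simp add: power2_eq_square power3_eq_cube algebra_simps)
      finally show ?thesis .
    qed
    have vne: "complex_of_real v \<noteq> 0" using vpos by simp
    have nne: "(of_nat n :: complex) \<noteq> 0" using hs by simp
    have E: "- (of_nat s - of_real (real n * \<mu>)) / (of_nat s * Z0 ^ (s - 1) - deriv (\<lambda>z. pgf P z ^ n) Z0)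
             - (1 / Z0) ^ (s - 1) = (1 / Z0) ^ m * ((Dv - Q) / Q)"
    proof -
      have den: "of_nat s * Z0 ^ m - deriv (\<lambda>z. pgf P z ^ n) Z0 = - (Z0 ^ m * of_nat n * Q / of_real v)"
      proof -
        have "of_nat s * Z0 ^ m - deriv (\<lambda>z. pgf P z ^ n) Z0
              = Z0 ^ m * ((of_nat s - of_real (real n * \<mu>)) - of_nat n * D1v)"
          by (simp add: dA2 algebra_simps)
        also have "\<dots> = Z0 ^ m * (of_nat n * Dv / of_real v - of_nat n * D1v)" by (simp add: gc')
        also have "\<dots> = - (Z0 ^ m * of_nat n * Q / of_real v)"
          using vne by (simp add: Q_def field_simps)
        finally show ?thesis .
      qed
      have "- (of_nat s - of_real (real n * \<mu>)) / (of_nat s * Z0 ^ (s - 1) - deriv (\<lambda>z. pgf P z ^ n) Z0)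
            = - (of_nat n * Dv / of_real v) / (- (Z0 ^ m * of_nat n * Q / of_real v))"
        unfolding m_def[symmetric] den gc by (rule refl)
      also have "\<dots> = Dv / (Z0 ^ m * Q)" using vne nne Zne Qne by (simp add: field_simps)
      finally have E1: "- (of_nat s - of_real (real n * \<mu>)) / (of_nat s * Z0 ^ (s - 1) - deriv (\<lambda>z. pgf P z ^ n) Z0)
            = Dv / (Z0 ^ m * Q)" .
      have "Dv / (Z0 ^ m * Q) - (1 / Z0) ^ m = (1 / Z0) ^ m * ((Dv - Q) / Q)"
        using Zne Qne by (simp add: power_one_over field_simps)
      thus ?thesis unfolding E1 m_def .
    qed
    have "cmod ((Dv - Q) / Q) \<le> C / sqrt (real s)"
    proof -
      have "cmod ((Dv - Q) / Q) = cmod (Dv - Q) / cmod Q" by (simp add: norm_divide)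
      also have "\<dots> \<le> (3 * B * v^3) / (\<sigma>2 * v^2 / 4)"
        using bnum Qlow \<sigma>pos vpos B by (intro frac_le) auto
      also have "\<dots> = 12 * B / \<sigma>2 * v" using vpos \<sigma>pos by (simp add: field_simps power2_eq_square power3_eq_cube)
      also have "\<dots> \<le> 12 * B / \<sigma>2 * u1" using vu1 B \<sigma>pos by (intro mult_left_mono) auto
      also have "\<dots> = C / sqrt (real s)" by (simp add: u1_def C_def field_simps)
      finally show ?thesis .
    qed
    hence "cmod ((1 / Z0) ^ m) * cmod ((Dv - Q) / Q) \<le> cmod ((1 / Z0) ^ m) * (C / sqrt (real s))"
      by (intro mult_left_mono) auto
    hence "cmod ((1 / Z0) ^ m * ((Dv - Q) / Q)) \<le> C / sqrt (real s) * cmod ((1 / Z0) ^ m)"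
      by (simp only: norm_mult mult.commute)
    thus ?thesis unfolding E by (simp add: m_def)
  qed
  show ?thesis unfolding Let_def \<mu>_def[symmetric]
    by (intro exI[of _ C] exI[of _ "nat \<lceil>M^2\<rceil>"] allI impI) (use key in blast)
qed

end
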